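(* Let $d\ge1$ and let $T:\mathbb{R}^d\to\mathbb{R}^d$ be the translation $T(x)=x+e_1$, where $e_1=(1,0,\ldots,0)$. Then $T$ does not satisfy the topological shadowing property.
   Context: Let $(X,d)$ be a metric space and $f:X\to X$ a homeomorphism; $\mathcal{C}^+=\{\epsilon:X\to\mathbb{R}^+ : \epsilon \text{ continuous}\}$. For $\delta\in\mathcal{C}^+$, a sequence $\{x_n\}_{n\in\mathbb{Z}}\subset X$ is a $\delta$-pseudo-orbit of $f$ if $d(f(x_n),x_{n+1})<\delta(f(x_n))$ for every $n\in\mathbb{Z}$. For $\epsilon\in\mathcal{C}^+$, the sequence $\{x_n\}$ is $\epsilon$-shadowed by an orbit if there is $y\in X$ with $d(f^n(y),x_n)<\epsilon(x_n)$ for every $n\in\mathbb{Z}$. The homeomorphism $f$ satisfies the topological shadowing property if for every $\epsilon\in\mathcal{C}^+$ there exists $\delta\in\mathcal{C}^+$ such that every $\delta$-pseudo-orbit is $\epsilon$-shadowed by an orbit. $\mathbb{R}^d$ carries the Euclidean metric. *)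

theory Defs
  imports "HOL-Analysis.Analysis"
begin

definition pos_cont :: "('a::metric_space \<Rightarrow> real) set" where
  "pos_cont = {e. continuous_on UNIV e \<and> (\<forall>x. e x > 0)}"

definition pseudo_orbit :: "('a::metric_space \<Rightarrow> 'a) \<Rightarrow> ('a \<Rightarrow> real) \<Rightarrow> (int \<Rightarrow> 'a) \<Rightarrow> bool" where
  "pseudo_orbit f \<delta> xs \<longleftrightarrow> (\<forall>n. dist (f (xs n)) (xs (n + 1)) < \<delta> (f (xs n)))"

definition zorbit :: "('a \<Rightarrow> 'a) \<Rightarrow> int \<Rightarrow> 'a \<Rightarrow> 'a" where
  "zorbit f n y = (if n \<ge> 0 then (f ^^ nat n) y else (inv f ^^ nat (- n)) y)"

definition shadowed :: "('a::metric_space \<Rightarrow> 'a) \<Rightarrow> ('a \<Rightarrow> real) \<Rightarrow> (int \<Rightarrow> 'a) \<Rightarrow> bool" where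
  "shadowed f \<epsilon> xs \<longleftrightarrow> (\<exists>y. \<forall>n. dist (zorbit f n y) (xs n) < \<epsilon> (xs n))"

definition topological_shadowing :: "('a::metric_space \<Rightarrow> 'a) \<Rightarrow> bool" where
  "topological_shadowing f \<longleftrightarrow>
     (\<forall>\<epsilon>\<in>pos_cont. \<exists>\<delta>\<in>pos_cont. \<forall>xs. pseudo_orbit f \<delta> xs \<longrightarrow> shadowed f \<epsilon> xs)"

end

theory Submission
  imports Defs
begin

lemma zorb:
  fixes a :: "'a::real_normed_vector"
  shows "zorbit (\<lambda>x. x + a) n y = y + of_int n *\<^sub>R a"
proof -
  have inv: "inv (\<lambda>x. x + a) = (\<lambda>x. x - a)"
    by (rule ext, rule inv_f_eq) (auto intro: injI)
  have p: "((\<lambda>x. x + a) ^^ k) y = y + real k *\<^sub>R a" for k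
    by (induction k) (auto simp: algebra_simps)
  have m: "((\<lambda>x. x - a) ^^ k) y = y - real k *\<^sub>R a" for k
    by (induction k) (auto simp: algebra_simps)
  show ?thesis
  proof (cases "n \<ge> 0")
    case True
    then show ?thesis using p[of "nat n"] by (simp add: zorbit_def inv)
  next
    case False
    then have "real (nat (-n)) = - of_int n" by simp
    then show ?thesis using False m[of "nat (-n)"] by (simp add: algebra_simps zorbit_def inv)
  qed
qed

theorem mainTheorem10:
  fixes i :: "'n::finite"
  shows "\<not> topological_shadowing (\<lambda>x::real^'n. x + axis i 1)"
proof
  assume H: "topological_shadowing (\<lambda>x::real^'n. x + axis i 1)"
  define a :: "real^'n" where "a = axis i 1"
  have na: "norm a = 1" unfolding a_def by simp
  define e :: "real^'n \<Rightarrow> real" where "e = (\<lambda>x. 1 / (1 + norm x))"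
  have "1 + norm x \<noteq> 0" for x :: "real^'n" by (smt (verit) norm_ge_zero)
  hence "e \<in> pos_cont" unfolding pos_cont_def e_def
  proof (intro CollectI conjI allI)
    assume nz: "\<And>x::real^'n. 1 + norm x \<noteq> 0"
    show "continuous_on UNIV (\<lambda>x::real^'n. 1/(1+norm x))"
      by (intro continuous_intros) (simp add: nz)
    fix x :: "real^'n" have "0 \<le> norm x" by simp
    hence "0 < 1 + norm x" by linarith
    thus "0 < 1/(1+norm x)" by simp
  qed
  then obtain d where d: "d \<in> pos_cont" and
    sh: "\<And>xs. pseudo_orbit (\<lambda>x. x + a) d xs \<Longrightarrow> shadowed (\<lambda>x. x + a) e xs"
    using H unfolding topological_shadowing_def a_def by blast
  have dpos: "d a > 0" using d unfolding pos_cont_def by auto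
  define c where "c = d a / 2"
  have cpos: "c > 0" using dpos by (simp add: c_def)
  define xs where "xs = (\<lambda>n::int. of_int n *\<^sub>R a + (if n \<ge> 1 then c *\<^sub>R a else 0))"
  have "pseudo_orbit (\<lambda>x. x + a) d xs"
    unfolding pseudo_orbit_def
  proof
    fix n :: int
    show "dist (xs n + a) (xs (n + 1)) < d (xs n + a)"
    proof (cases "n = 0")
      case True
      then show ?thesis using dpos cpos na by (simp add: xs_def dist_norm c_def)
    next
      case False
      have "xs n + a = xs (n+1)"
      proof (cases "n \<ge> 1")
        case True
        then show ?thesis by (simp add: xs_def algebra_simps)
      next
        case F: False
        then have "n < 0" "\<not> n + 1 \<ge> 1" using False by auto
        then show ?thesis using F by (simp add: xs_def algebra_simps)
      qed
      moreover have "d (xs n + a) > 0" using d unfolding pos_cont_def by auto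
      ultimately show ?thesis by simp
    qed
  qed
  then obtain y where y: "\<And>n. dist (y + of_int n *\<^sub>R a) (xs n) < e (xs n)"
    using sh unfolding shadowed_def zorb by blast
  obtain m :: nat where m: "real m > 2 / c" using reals_Archimedean2 by blast
  have "2 / c > 0" using cpos by simp
  hence "real m > 0" using m by linarith
  hence m1: "m \<ge> 1" by simp
  have bnd: "1 / (1 + r) \<le> c / 2" if "r \<ge> real m" for r
  proof -
    have "2 / c < 1 + r" using m that by linarith
    hence "2 < c * (1 + r)" using cpos by (simp add: field_simps)
    thus ?thesis using cpos that by (simp add: field_simps)
  qed
  have A: "norm y < c / 2"
  proof -
    have "xs (- int m) = - (real m *\<^sub>R a)" using m1 by (simp add: xs_def)
    moreover have "(of_int (- int m)::real) = - real m" by simp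
    ultimately have "dist (y + of_int (- int m) *\<^sub>R a) (xs (- int m)) = norm y"
      by (simp add: dist_norm)
    moreover have "norm (xs (- int m)) = real m"
      using \<open>xs (- int m) = _\<close> na by simp
    hence "e (xs (- int m)) = 1 / (1 + real m)" by (simp add: e_def)
    hence "e (xs (- int m)) \<le> c/2"
      using bnd[of "real m"] by simp
    ultimately show ?thesis using y[of "- int m"] by linarith
  qed
  have B: "norm (y - c *\<^sub>R a) < c / 2"
  proof -
    have xm: "xs (int m) = (real m + c) *\<^sub>R a" using m1 by (simp add: xs_def algebra_simps)
    hence "dist (y + of_int (int m) *\<^sub>R a) (xs (int m)) = norm (y + real m *\<^sub>R a - (real m + c) *\<^sub>R a)"
      by (simp add: dist_norm)
    also have "y + real m *\<^sub>R a - (real m + c) *\<^sub>R a = y - c *\<^sub>R a"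
      by (simp add: scaleR_add_left)
    finally have "dist (y + of_int (int m) *\<^sub>R a) (xs (int m)) = norm (y - c *\<^sub>R a)" .
    moreover have "norm (xs (int m)) = real m + c"
      using xm na cpos by simp
    hence "e (xs (int m)) = 1 / (1 + (real m + c))" by (simp add: e_def)
    hence "e (xs (int m)) \<le> c/2"
      using cpos bnd[of "real m + c"] by simp
    ultimately show ?thesis using y[of "int m"] by linarith
  qed
  have "c = norm (c *\<^sub>R a)" using na cpos by simp
  also have "\<dots> \<le> norm y + norm (y - c *\<^sub>R a)"
    using norm_triangle_ineq4[of y "y - c *\<^sub>R a"] by simp
  also have "\<dots> < c" using A B by linarith
  finally show False by simp
qed

end
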